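(* Let $X$ be a Banach space, $\alpha$ a left tensorial norm on $\ell_\infty\otimes X$, and let $L$ be a Banach lattice and $J\colon X\to L$ a linear isometry such that $\|\bigvee_{j=1}^k|Jy_j|\|=\alpha(\sum_{j=1}^k e_j\otimes y_j)$ for all $k$ and all $y_1,\dots,y_k\in X$. Then for all $n\in\mathbb{N}$, all $x_1,\dots,x_n\in X$ and all $h_1,\dots,h_n\in\ell_\infty$, $$\Big\|\sum_{j=1}^n h_j\otimes Jx_j\Big\|_m=\alpha\Big(\sum_{j=1}^n h_j\otimes x_j\Big).$$
   Context: All spaces are real. $(e_j)$ is the unit vector basis of $c_0\subseteq\ell_\infty$. A norm $\alpha$ on $Y\otimes X$ is left tensorial if $\alpha(y\otimes x)=\|y\|\|x\|$ and $\|T\otimes I_X\|\le\|T\|$ on $(Y\otimes X,\alpha)$ for every bounded $T\colon Y\to Y$. For a Banach space $F$, a Banach lattice $L$ and $u=\sum_{j=1}^n f_j\otimes y_j\in F\otimes L$, $\|u\|_m$ is the order bounded norm of the operator $F^*\to L$, $\varphi\mapsto\sum_j\varphi(f_j)y_j$, i.e. $\|u\|_m=\inf\{\|z\|: z\in L,\ z\ge 0,\ |\sum_j\varphi(f_j)y_j|\le\|\varphi\|z \text{ for all }\varphi\in F^*\}$; equivalently (Krivine calculus) $\|u\|_m=\|\sup_{\|\varphi\|\le1}|\sum_j\varphi(f_j)y_j|\|_L$. *)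

theory Defs
  imports "HOL-Analysis.Analysis"
begin

text \<open>ell_infinity: bounded (automatically continuous) real functions on nat.\<close>
type_synonym linf = "nat \<Rightarrow>\<^sub>C real"

text \<open>Unit vector e_j (indices start at 0).\<close>
definition unitvec :: "nat \<Rightarrow> linf" where
  "unitvec j = Bcontfun (\<lambda>i. if i = j then 1 else 0)"

text \<open>Elements of the algebraic tensor product Y (x) X are represented by finite
  lists of pairs [(y_1,x_1),...,(y_n,x_n)] standing for sum_j y_j (x) x_j.\<close>
definition tensor_eq :: "('y::real_vector \<times> 'x::real_vector) list \<Rightarrow> ('y \<times> 'x) list \<Rightarrow> bool" where
  "tensor_eq u v \<longleftrightarrow> (\<forall>B :: 'y \<Rightarrow> 'x \<Rightarrow> real. bilinear B \<longrightarrow>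
      (\<Sum>(y,x)\<leftarrow>u. B y x) = (\<Sum>(y,x)\<leftarrow>v. B y x))"

definition tensor_norm :: "(('y::real_vector \<times> 'x::real_vector) list \<Rightarrow> real) \<Rightarrow> bool" where
  "tensor_norm \<alpha> \<longleftrightarrow>
     (\<forall>u v. tensor_eq u v \<longrightarrow> \<alpha> u = \<alpha> v) \<and>
     (\<forall>u. 0 \<le> \<alpha> u) \<and>
     (\<forall>u. \<alpha> u = 0 \<longleftrightarrow> tensor_eq u []) \<and>
     (\<forall>u c. \<alpha> (map (\<lambda>(y,x). (c *\<^sub>R y, x)) u) = \<bar>c\<bar> * \<alpha> u) \<and>
     (\<forall>u v. \<alpha> (u @ v) \<le> \<alpha> u + \<alpha> v)"

definition left_tensorial :: "(('y::real_normed_vector \<times> 'x::real_normed_vector) list \<Rightarrow> real) \<Rightarrow> bool" where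
  "left_tensorial \<alpha> \<longleftrightarrow> tensor_norm \<alpha> \<and>
     (\<forall>y x. \<alpha> [(y,x)] = norm y * norm x) \<and>
     (\<forall>T u. bounded_linear T \<longrightarrow>
        \<alpha> (map (\<lambda>(y,x). (T y, x)) u) \<le> onorm T * \<alpha> u)"

definition labs :: "'a::{lattice, uminus} \<Rightarrow> 'a" where
  "labs x = sup x (- x)"

definition banach_lattice :: "'l::{banach, ordered_real_vector, lattice} itself \<Rightarrow> bool" where
  "banach_lattice _ \<longleftrightarrow> (\<forall>x y :: 'l. labs x \<le> labs y \<longrightarrow> norm x \<le> norm y)"

fun lsup :: "'a::{lattice, zero} list \<Rightarrow> 'a" where
  "lsup [] = 0"
| "lsup [x] = x"
| "lsup (x # y # zs) = sup x (lsup (y # zs))"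

text \<open>Order bounded norm ||u||_m of u = sum_j f_j (x) y_j in F (x) L, as an extended
  real (infinity if the operator F^* -> L is not order bounded).\<close>
definition m_norm :: "('f::real_normed_vector \<times> 'l::{banach, ordered_real_vector, lattice}) list \<Rightarrow> ereal" where
  "m_norm u = Inf {ereal (norm z) | z. 0 \<le> z \<and>
      (\<forall>\<phi> :: 'f \<Rightarrow> real. bounded_linear \<phi> \<longrightarrow>
         labs (\<Sum>(f,y)\<leftarrow>u. \<phi> f *\<^sub>R y) \<le> onorm \<phi> *\<^sub>R z)}"

end

theory Submission
  imports Defs
begin


lemma bc_apply:
  fixes f :: "nat \<Rightarrow> real"
  assumes "\<And>i. \<bar>f i\<bar> \<le> M"
  shows "apply_bcontfun (Bcontfun f) = f"
proof (rule Bcontfun_inverse)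
  have "bounded (range f)" unfolding bounded_iff using assms by auto
  then show "f \<in> bcontfun" unfolding bcontfun_def by simp
qed

lemma bc_abs_le: "\<bar>apply_bcontfun (g::linf) i\<bar> \<le> norm g"
  using norm_bounded[of g i] by simp

lemma unitvec_apply: "apply_bcontfun (unitvec k) i = (if i = k then 1 else 0)"
  unfolding unitvec_def by (subst bc_apply[where M=1]) auto

lemma bc_sum_apply: "apply_bcontfun (sum f S) i = (\<Sum>k\<in>S. apply_bcontfun (f k) i)"
  for f :: "'a \<Rightarrow> linf"
  by (induction S rule: infinite_finite_induct) auto

definition T2 :: "(nat \<Rightarrow> nat) \<Rightarrow> nat \<Rightarrow> linf \<Rightarrow> linf" where
  "T2 p K g = Bcontfun (\<lambda>k. if k < K then apply_bcontfun g (p k) else 0)"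

definition T1 :: "(nat \<Rightarrow> nat) \<Rightarrow> linf \<Rightarrow> linf" where
  "T1 s g = Bcontfun (\<lambda>i. apply_bcontfun g (s i))"

lemma T2_apply: "apply_bcontfun (T2 p K g) k = (if k < K then apply_bcontfun g (p k) else 0)"
  unfolding T2_def by (subst bc_apply[where M="norm g"]) (auto simp: bc_abs_le)

lemma T1_apply: "apply_bcontfun (T1 s g) i = apply_bcontfun g (s i)"
  unfolding T1_def by (subst bc_apply[where M="norm g"]) (auto simp: bc_abs_le)

lemma T2_norm: "norm (T2 p K g) \<le> norm g"
  by (rule norm_bound) (auto simp: T2_apply bc_abs_le)

lemma T1_norm: "norm (T1 s g) \<le> norm g"
  by (rule norm_bound) (auto simp: T1_apply bc_abs_le)

lemma T2_bl: "bounded_linear (T2 p K)"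
  by (rule bounded_linear_intro[where K=1])
     (auto intro!: bcontfun_eqI simp: T2_apply T2_norm)

lemma T1_bl: "bounded_linear (T1 s)"
  by (rule bounded_linear_intro[where K=1])
     (auto intro!: bcontfun_eqI simp: T1_apply T1_norm)

lemma T2_onorm: "onorm (T2 p K) \<le> 1"
  by (rule onorm_bound) (auto simp: T2_norm)

lemma T1_onorm: "onorm (T1 s) \<le> 1"
  by (rule onorm_bound) (auto simp: T1_norm)

lemma T2_expand: "T2 p K g = (\<Sum>k<K. apply_bcontfun g (p k) *\<^sub>R unitvec k)"
proof (rule bcontfun_eqI)
  fix x
  have "(\<Sum>k<K. apply_bcontfun g (p k) * (if x = k then 1 else 0)) = (\<Sum>k<K. if x = k then apply_bcontfun g (p k) else 0)"
    by (rule sum.cong) auto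
  then show "apply_bcontfun (T2 p K g) x = apply_bcontfun (\<Sum>k<K. apply_bcontfun g (p k) *\<^sub>R unitvec k) x"
    by (simp add: T2_apply bc_sum_apply unitvec_apply)
qed

lemma ev_bl: "bounded_linear (\<lambda>g::linf. apply_bcontfun g i)"
  by (rule bounded_linear_intro[where K=1]) (auto simp: bc_abs_le)

lemma ev_onorm: "onorm (\<lambda>g::linf. apply_bcontfun g i) \<le> 1"
  by (rule onorm_bound) (auto simp: bc_abs_le)


lemma labs_ge1: "x \<le> labs (x::'l::{ordered_real_vector, lattice})"
  unfolding labs_def by simp
lemma labs_ge2: "- x \<le> labs (x::'l::{ordered_real_vector, lattice})"
  unfolding labs_def by simp

lemma labs_nonneg: "0 \<le> labs (x::'l::{ordered_real_vector, lattice})"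
proof -
  have "0 \<le> labs x + labs x"
    using add_mono[OF labs_ge1[of x] labs_ge2[of x]] by simp
  have "0 \<le> (1/2::real) *\<^sub>R (labs x + labs x)"
    by (rule scaleR_nonneg_nonneg[OF _ \<open>0 \<le> labs x + labs x\<close>]) simp
  also have "(1/2::real) *\<^sub>R (labs x + labs x) = labs x"
    by (metis scaleR_half_double)
  finally show ?thesis .
qed

lemma labs_least: "x \<le> z \<Longrightarrow> - x \<le> z \<Longrightarrow> labs (x::'l::{ordered_real_vector, lattice}) \<le> z"
  unfolding labs_def by simp

lemma labs_triangle: "labs (x + y) \<le> labs x + labs (y::'l::{ordered_real_vector, lattice})"
proof (rule labs_least)
  show "x + y \<le> labs x + labs y" by (intro add_mono labs_ge1)
  have "- (x + y) = -x + -y" by simp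
  also have "\<dots> \<le> labs x + labs y" by (intro add_mono labs_ge2)
  finally show "- (x + y) \<le> labs x + labs y" .
qed

lemma labs_scale: "labs (c *\<^sub>R x) \<le> \<bar>c\<bar> *\<^sub>R labs (x::'l::{ordered_real_vector, lattice})"
proof (cases "c \<ge> 0")
  case True
  then show ?thesis
    by (intro labs_least) (auto intro: scaleR_left_mono simp: labs_ge1 labs_ge2 simp flip: scaleR_minus_right)
next
  case False
  then have "\<bar>c\<bar> = - c" by simp
  have c: "0 \<le> - c" using False by simp
  show ?thesis
  proof (rule labs_least)
    have "c *\<^sub>R x = (-c) *\<^sub>R (-x)" by simp
    also have "\<dots> \<le> (-c) *\<^sub>R labs x" by (rule scaleR_left_mono[OF labs_ge2 c])
    finally show "c *\<^sub>R x \<le> \<bar>c\<bar> *\<^sub>R labs x" using \<open>\<bar>c\<bar> = - c\<close> by simp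
    have "- (c *\<^sub>R x) = (-c) *\<^sub>R x" by simp
    also have "\<dots> \<le> (-c) *\<^sub>R labs x" by (rule scaleR_left_mono[OF labs_ge1 c])
    finally show "- (c *\<^sub>R x) \<le> \<bar>c\<bar> *\<^sub>R labs x" using \<open>\<bar>c\<bar> = - c\<close> by simp
  qed
qed

lemma labs_of_nonneg: "0 \<le> x \<Longrightarrow> labs (x::'l::{ordered_real_vector, lattice}) = x"
  unfolding labs_def by (rule sup_absorb1) (meson neg_le_0_iff_le order_trans)

lemma labs_labs: "labs (labs (x::'l::{ordered_real_vector, lattice})) = labs x"
  by (rule labs_of_nonneg[OF labs_nonneg])

lemma labs_zero: "labs (0::'l::{ordered_real_vector, lattice}) = 0"
  by (simp add: labs_of_nonneg)

lemma labs_sum_list: "labs (sum_list (map f xs)) \<le> sum_list (map (\<lambda>a. labs (f a)) xs)"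
  for f :: "'a \<Rightarrow> 'l::{ordered_real_vector, lattice}"
proof (induction xs)
  case Nil then show ?case by (simp add: labs_zero)
next
  case (Cons a xs)
  then show ?case using labs_triangle[of "f a" "sum_list (map f xs)"]
    by (simp add: add_left_mono order_trans)
qed

lemma labs_sum: "labs (sum f S) \<le> (\<Sum>a\<in>S. labs (f a))"
  for f :: "'a \<Rightarrow> 'l::{ordered_real_vector, lattice}"
proof (induction S rule: infinite_finite_induct)
  case (insert a S)
  then show ?case using labs_triangle[of "f a" "sum f S"]
    by (simp add: add_left_mono order_trans)
qed (auto simp: labs_zero)

lemma lsup_upper: "x \<in> set xs \<Longrightarrow> x \<le> lsup (xs::'a::{lattice,zero} list)"
  by (induction xs rule: lsup.induct) (auto intro: le_supI2)

lemma lsup_least: "(\<forall>x\<in>set xs. x \<le> z) \<Longrightarrow> 0 \<le> z \<Longrightarrow> lsup (xs::'a::{lattice,zero} list) \<le> z"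
  by (induction xs rule: lsup.induct) auto

lemma lsup_nonneg: "(\<forall>x\<in>set xs. 0 \<le> x) \<Longrightarrow> 0 \<le> lsup (xs::'a::{lattice,zero} list)"
  by (induction xs rule: lsup.induct) (auto intro: le_supI1)

lemma bl_norm_mono:
  assumes "banach_lattice TYPE('l::{banach, ordered_real_vector, lattice})"
    and "0 \<le> x" "x \<le> (y::'l)"
  shows "norm x \<le> norm y"
proof -
  have "0 \<le> y" using assms by order
  then show ?thesis using assms unfolding banach_lattice_def
    by (simp add: labs_of_nonneg)
qed

lemma bl_norm_labs:
  assumes "banach_lattice TYPE('l::{banach, ordered_real_vector, lattice})"
  shows "norm (labs (x::'l)) = norm x"
  using assms unfolding banach_lattice_def
  by (metis labs_labs order_antisym order_refl)



lemma tn_eq: "tensor_norm \<alpha> \<Longrightarrow> tensor_eq u v \<Longrightarrow> \<alpha> u = \<alpha> v"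
  unfolding tensor_norm_def by blast

lemma tensor_eq_map:
  fixes T :: "'y::real_vector \<Rightarrow> 'y" and u v :: "('y \<times> 'x::real_vector) list"
  assumes "linear T" "tensor_eq u v"
  shows "tensor_eq (map (\<lambda>(y,x). (T y, x)) u) (map (\<lambda>(y,x). (T y, x)) v)"
  unfolding tensor_eq_def
proof (intro allI impI)
  fix B :: "'y \<Rightarrow> 'x \<Rightarrow> real" assume B: "bilinear B"
  have "bilinear (\<lambda>y x. B (T y) x)"
    using B assms(1) unfolding bilinear_def
    by (auto intro: linear_compose[of T "\<lambda>y. B y _", unfolded o_def])
  then have "(\<Sum>(y,x)\<leftarrow>u. B (T y) x) = (\<Sum>(y,x)\<leftarrow>v. B (T y) x)"
    using assms(2) unfolding tensor_eq_def by blast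
  then show "(\<Sum>(y,x)\<leftarrow>map (\<lambda>(y,x). (T y, x)) u. B y x) = (\<Sum>(y,x)\<leftarrow>map (\<lambda>(y,x). (T y, x)) v. B y x)"
    by (simp add: o_def case_prod_unfold)
qed

lemma alpha_nil: "tensor_norm \<alpha> \<Longrightarrow> \<alpha> [] = 0"
  unfolding tensor_norm_def by (simp add: tensor_eq_def)

lemma alpha_le_sum:
  assumes "tensor_norm \<alpha>" "\<forall>y x. \<alpha> [(y,x)] = norm y * norm x"
  shows "\<alpha> u \<le> (\<Sum>(y,x)\<leftarrow>u. norm y * norm x)"
proof (induction u)
  case Nil then show ?case using alpha_nil[OF assms(1)] by simp
next
  case (Cons a u)
  obtain y x where a: "a = (y,x)" by force
  have "\<alpha> (a # u) = \<alpha> ([a] @ u)" by simp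
  also have "\<dots> \<le> \<alpha> [a] + \<alpha> u" using assms(1) unfolding tensor_norm_def by blast
  finally show ?case using Cons assms(2) a by simp
qed

lemma sum_list_swap: "sum_list (map (\<lambda>a. \<Sum>k\<in>S. f a k) xs) = (\<Sum>k\<in>S. sum_list (map (\<lambda>a. f a k) xs))"
  by (induction xs) (auto simp: sum.distrib)

lemma linear_sum_list: "linear f \<Longrightarrow> f (sum_list (map g xs)) = sum_list (map (\<lambda>a. f (g a)) xs)"
  by (induction xs) (auto simp: linear_add linear_0)

lemma scaleR_sum_list: "c *\<^sub>R sum_list (map g xs) = sum_list (map (\<lambda>a. c *\<^sub>R g a) xs)"
  for g :: "'a \<Rightarrow> 'b::real_vector"
  by (induction xs) (auto simp: scaleR_right_distrib)

lemma norm_sum_list_le: "norm (sum_list (map g xs)) \<le> sum_list (map (\<lambda>a. norm (g a)) xs)"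
  for g :: "'a \<Rightarrow> 'b::real_normed_vector"
  by (induction xs) (auto intro: norm_triangle_le)

lemma sum_list_upt_sum: "sum_list (map f [0..<K]) = (\<Sum>k<K. f k)"
  for f :: "nat \<Rightarrow> 'b::comm_monoid_add"
  by (simp add: interv_sum_list_conv_sum_set_nat atLeast0LessThan)

lemma zip_Z: "zip (map unitvec [0..<K]) (map v [0..<K]) = map (\<lambda>k. (unitvec k, v k)) [0..<K]"
  by (simp add: list_eq_iff_nth_eq)



context
  fixes \<alpha> :: "(linf \<times> 'x::banach) list \<Rightarrow> real"
    and J :: "'x \<Rightarrow> 'l::{banach, ordered_real_vector, lattice}"
    and u :: "(linf \<times> 'x) list" and \<epsilon> :: real and K :: nat and \<sigma> p :: "nat \<Rightarrow> nat"
  assumes LT: "left_tensorial \<alpha>" and BL: "banach_lattice TYPE('l)" and linJ: "linear J"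
    and iso: "\<forall>x. norm (J x) = norm x"
    and hyp: "\<forall>ys :: 'x list. ys \<noteq> [] \<longrightarrow>
           norm (lsup (map (\<lambda>y. labs (J y)) ys)) = \<alpha> (zip (map unitvec [0..<length ys]) ys)"
    and Kpos: "0 < K" and sK: "\<forall>i. \<sigma> i < K" and eps: "0 \<le> \<epsilon>"
    and appr: "\<forall>(h,x)\<in>set u. \<forall>i. \<bar>apply_bcontfun h i - apply_bcontfun h (p (\<sigma> i))\<bar> \<le> \<epsilon>"
begin

definition "vv k = (\<Sum>(h,x)\<leftarrow>u. apply_bcontfun h (p k) *\<^sub>R x)"
definition "ZZ = zip (map unitvec [0..<K]) (map vv [0..<K])"
definition "LL = lsup (map (\<lambda>k. labs (J (vv k))) [0..<K])"

lemma TN: "tensor_norm \<alpha>" using LT unfolding left_tensorial_def by blast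
lemma sing: "\<forall>y x. \<alpha> [(y,x)] = norm y * norm x" using LT unfolding left_tensorial_def by blast
lemma Tle: "bounded_linear T \<Longrightarrow> \<alpha> (map (\<lambda>(y,x). (T y, x)) w) \<le> onorm T * \<alpha> w"
  using LT unfolding left_tensorial_def by blast
lemma apos: "0 \<le> \<alpha> w" using TN unfolding tensor_norm_def by blast

lemma ZZ_alt: "ZZ = map (\<lambda>k. (unitvec k, vv k)) [0..<K]"
  unfolding ZZ_def by (rule zip_Z)

lemma alphaZ: "\<alpha> ZZ = norm LL"
proof -
  have "map vv [0..<K] \<noteq> []" using Kpos by simp
  then have "norm (lsup (map (\<lambda>y. labs (J y)) (map vv [0..<K]))) = \<alpha> ZZ"
    using hyp unfolding ZZ_def by (metis length_map length_upt minus_nat.diff_0)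
  then show ?thesis unfolding LL_def by (simp add: o_def)
qed

lemma LL_nonneg: "0 \<le> LL"
  unfolding LL_def by (rule lsup_nonneg) (auto simp: labs_nonneg)

lemma LL_upper: "k < K \<Longrightarrow> labs (J (vv k)) \<le> LL"
  unfolding LL_def by (rule lsup_upper) auto

lemma T2u_eq: "tensor_eq (map (\<lambda>(y,x). (T2 p K y, x)) u) ZZ"
  unfolding tensor_eq_def
proof (intro allI impI)
  fix B :: "linf \<Rightarrow> 'x \<Rightarrow> real" assume B: "bilinear B"
  have l1: "linear (\<lambda>y. B y x)" for x using B unfolding bilinear_def by blast
  have l2: "linear (B y)" for y using B unfolding bilinear_def by blast
  have e1: "B (T2 p K h) x = (\<Sum>k<K. apply_bcontfun h (p k) * B (unitvec k) x)" for h x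
    by (simp add: T2_expand linear_sum[OF l1] linear_scale[OF l1])
  have e2: "B (unitvec k) (vv k) = (\<Sum>(h,x)\<leftarrow>u. apply_bcontfun h (p k) * B (unitvec k) x)" for k
    unfolding vv_def by (simp add: linear_sum_list[OF l2] case_prod_unfold linear_scale[OF l2])
  have "(\<Sum>(y,x)\<leftarrow>map (\<lambda>(y,x). (T2 p K y, x)) u. B y x) = (\<Sum>(h,x)\<leftarrow>u. B (T2 p K h) x)"
    by (simp add: o_def case_prod_unfold)
  also have "\<dots> = (\<Sum>(h,x)\<leftarrow>u. \<Sum>k<K. apply_bcontfun h (p k) * B (unitvec k) x)"
    by (simp add: e1)
  also have "\<dots> = (\<Sum>k<K. \<Sum>(h,x)\<leftarrow>u. apply_bcontfun h (p k) * B (unitvec k) x)"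
    by (simp add: case_prod_unfold sum_list_swap)
  also have "\<dots> = (\<Sum>k<K. B (unitvec k) (vv k))"
    by (simp add: e2)
  also have "\<dots> = (\<Sum>(y,x)\<leftarrow>ZZ. B y x)"
    by (simp add: ZZ_alt o_def sum_list_upt_sum)
  finally show "(\<Sum>(y,x)\<leftarrow>map (\<lambda>(y,x). (T2 p K y, x)) u. B y x) = (\<Sum>(y,x)\<leftarrow>ZZ. B y x)" .
qed

lemma claimA: "\<alpha> ZZ \<le> \<alpha> u"
proof -
  have "\<alpha> ZZ = \<alpha> (map (\<lambda>(y,x). (T2 p K y, x)) u)"
    using tn_eq[OF TN T2u_eq] by simp
  also have "\<dots> \<le> onorm (T2 p K) * \<alpha> u" by (rule Tle[OF T2_bl])
  also have "\<dots> \<le> 1 * \<alpha> u" by (rule mult_right_mono[OF T2_onorm apos])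
  finally show ?thesis by simp
qed

lemma d_norm: "(h,x) \<in> set u \<Longrightarrow> norm (h - T1 \<sigma> (T2 p K h)) \<le> \<epsilon>"
  using appr sK by (intro norm_bound) (auto simp: T1_apply T2_apply)

lemma claimB: "\<alpha> u \<le> \<alpha> ZZ + \<epsilon> * (\<Sum>(h,x)\<leftarrow>u. norm x)"
proof -
  define W where "W = map (\<lambda>(y,x). (T1 \<sigma> y, x)) (map (\<lambda>(y,x). (T2 p K y, x)) u)"
  define d where "d = map (\<lambda>(y,x). (y - T1 \<sigma> (T2 p K y), x)) u"
  have teq: "tensor_eq u (W @ d)"
    unfolding tensor_eq_def
  proof (intro allI impI)
    fix B :: "linf \<Rightarrow> 'x \<Rightarrow> real" assume B: "bilinear B"
    have l1: "linear (\<lambda>y. B y x)" for x using B unfolding bilinear_def by blast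
    have "(\<Sum>(y,x)\<leftarrow>W @ d. B y x) = (\<Sum>(h,x)\<leftarrow>u. B (T1 \<sigma> (T2 p K h)) x + B (h - T1 \<sigma> (T2 p K h)) x)"
      unfolding W_def d_def by (simp add: o_def case_prod_unfold sum_list_addf)
    also have "\<dots> = (\<Sum>(h,x)\<leftarrow>u. B h x)"
      by (simp add: linear_diff[OF l1])
    finally show "(\<Sum>(y,x)\<leftarrow>u. B y x) = (\<Sum>(y,x)\<leftarrow>W @ d. B y x)" by simp
  qed
  have lT1: "linear (T1 \<sigma>)" using T1_bl bounded_linear.linear by blast
  have "tensor_eq W (map (\<lambda>(y,x). (T1 \<sigma> y, x)) ZZ)"
    unfolding W_def by (rule tensor_eq_map[OF lT1 T2u_eq])
  then have "\<alpha> W = \<alpha> (map (\<lambda>(y,x). (T1 \<sigma> y, x)) ZZ)" by (rule tn_eq[OF TN])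
  also have "\<dots> \<le> onorm (T1 \<sigma>) * \<alpha> ZZ" by (rule Tle[OF T1_bl])
  also have "\<dots> \<le> 1 * \<alpha> ZZ" by (rule mult_right_mono[OF T1_onorm apos])
  finally have aW: "\<alpha> W \<le> \<alpha> ZZ" by simp
  have "\<alpha> d \<le> (\<Sum>(y,x)\<leftarrow>d. norm y * norm x)" by (rule alpha_le_sum[OF TN sing])
  also have "\<dots> = (\<Sum>(h,x)\<leftarrow>u. norm (h - T1 \<sigma> (T2 p K h)) * norm x)"
    unfolding d_def by (simp add: o_def case_prod_unfold)
  also have "\<dots> \<le> (\<Sum>(h,x)\<leftarrow>u. \<epsilon> * norm x)"
    by (rule sum_list_mono) (auto intro!: mult_right_mono d_norm)
  also have "\<dots> = \<epsilon> * (\<Sum>(h,x)\<leftarrow>u. norm x)"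
    using scaleR_sum_list[of \<epsilon> "\<lambda>(h,x). norm x" u] by (simp add: case_prod_unfold)
  finally have ad: "\<alpha> d \<le> \<epsilon> * (\<Sum>(h,x)\<leftarrow>u. norm x)" .
  have "\<alpha> u = \<alpha> (W @ d)" by (rule tn_eq[OF TN teq])
  also have "\<dots> \<le> \<alpha> W + \<alpha> d" using TN unfolding tensor_norm_def by blast
  finally show ?thesis using aW ad by linarith
qed

lemma Jvv: "J (vv k) = (\<Sum>(h,x)\<leftarrow>u. apply_bcontfun h (p k) *\<^sub>R J x)"
  unfolding vv_def by (simp add: linear_sum_list[OF linJ] case_prod_unfold linear_scale[OF linJ])

lemma sumJ: "(\<Sum>(f,y)\<leftarrow>map (\<lambda>(h,x). (h, J x)) u. \<phi> f *\<^sub>R y) = (\<Sum>(h,x)\<leftarrow>u. \<phi> h *\<^sub>R J x)"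
  by (simp add: o_def case_prod_unfold)

lemma claimD:
  assumes z0: "0 \<le> z"
    and dom: "\<forall>\<phi>. bounded_linear \<phi> \<longrightarrow> labs (\<Sum>(f,y)\<leftarrow>map (\<lambda>(h,x). (h, J x)) u. \<phi> f *\<^sub>R y) \<le> onorm \<phi> *\<^sub>R z"
  shows "\<alpha> ZZ \<le> norm z"
proof -
  have "labs (J (vv k)) \<le> z" if "k < K" for k
  proof -
    have "labs (J (vv k)) \<le> onorm (\<lambda>g::linf. apply_bcontfun g (p k)) *\<^sub>R z"
      using dom[rule_format, OF ev_bl[of "p k"]] unfolding sumJ Jvv .
    also have "\<dots> \<le> 1 *\<^sub>R z" by (rule scaleR_right_mono[OF ev_onorm z0])
    finally show ?thesis by simp
  qed
  then have "LL \<le> z" unfolding LL_def using z0 by (intro lsup_least) auto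
  then have "norm LL \<le> norm z" by (rule bl_norm_mono[OF BL LL_nonneg])
  then show ?thesis by (simp add: alphaZ)
qed


lemma coef_bound:
  assumes bl: "bounded_linear \<phi>"
  shows "(\<Sum>k<K. \<bar>\<phi> (T1 \<sigma> (unitvec k))\<bar>) \<le> onorm \<phi>"
proof -
  define c where "c k = \<phi> (T1 \<sigma> (unitvec k))" for k
  have linphi: "linear \<phi>" using bl bounded_linear.linear by blast
  have lT1: "linear (T1 \<sigma>)" using T1_bl bounded_linear.linear by blast
  have lpsi: "linear (\<lambda>g. \<phi> (T1 \<sigma> g))"
    using linear_compose[OF lT1 linphi] by (simp add: o_def)
  define g0 :: linf where "g0 = Bcontfun (\<lambda>k. sgn (c k))"
  have g0a: "apply_bcontfun g0 = (\<lambda>k. sgn (c k))"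
    unfolding g0_def by (rule bc_apply[where M=1]) (simp add: abs_sgn_eq)
  have ng0: "norm g0 \<le> 1"
    by (rule norm_bound) (simp add: g0a abs_sgn_eq)
  define g where "g = T2 id K g0"
  have ng: "norm (T1 \<sigma> g) \<le> 1"
    using T1_norm[of \<sigma> g] T2_norm[of id K g0] ng0 unfolding g_def by linarith
  have "\<phi> (T1 \<sigma> g) = (\<Sum>k<K. sgn (c k) * c k)"
    unfolding g_def T2_expand
    by (simp add: linear_sum[OF lpsi] linear_scale[OF lpsi] g0a c_def)
  also have "\<dots> = (\<Sum>k<K. \<bar>c k\<bar>)"
    by (rule sum.cong) (auto simp: sgn_if)
  finally have eq: "(\<Sum>k<K. \<bar>c k\<bar>) = \<phi> (T1 \<sigma> g)" by simp
  have "\<phi> (T1 \<sigma> g) \<le> onorm \<phi> * norm (T1 \<sigma> g)"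
    using onorm[OF bl, of "T1 \<sigma> g"] by simp
  also have "\<dots> \<le> onorm \<phi> * 1" by (rule mult_left_mono[OF ng onorm_pos_le[OF bl]])
  finally show ?thesis using eq unfolding c_def by simp
qed

lemma claimC:
  "\<exists>z. 0 \<le> z \<and>
     (\<forall>\<phi>. bounded_linear \<phi> \<longrightarrow> labs (\<Sum>(f,y)\<leftarrow>map (\<lambda>(h,x). (h, J x)) u. \<phi> f *\<^sub>R y) \<le> onorm \<phi> *\<^sub>R z) \<and>
     norm z \<le> \<alpha> ZZ + \<epsilon> * (\<Sum>(h,x)\<leftarrow>u. norm x)"
proof -
  define S where "S = (\<Sum>(h,x)\<leftarrow>u. labs (J x))"
  define z where "z = LL + \<epsilon> *\<^sub>R S"
  have S0: "0 \<le> S" unfolding S_def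
    by (rule sum_list_nonneg) (auto simp: labs_nonneg)
  have z0: "0 \<le> z" unfolding z_def
    using add_mono[OF LL_nonneg scaleR_nonneg_nonneg[OF eps S0]] by simp
  have nS: "norm S \<le> (\<Sum>(h,x)\<leftarrow>u. norm x)"
    unfolding S_def using norm_sum_list_le[of "\<lambda>(h,x). labs (J x)" u]
    by (simp add: case_prod_unfold bl_norm_labs[OF BL] iso)
  have "norm z \<le> norm LL + norm (\<epsilon> *\<^sub>R S)" unfolding z_def by (rule norm_triangle_ineq)
  also have "\<dots> = norm LL + \<epsilon> * norm S" using eps by simp
  also have "\<dots> \<le> norm LL + \<epsilon> * (\<Sum>(h,x)\<leftarrow>u. norm x)"
    using mult_left_mono[OF nS eps] by simp
  finally have nz: "norm z \<le> \<alpha> ZZ + \<epsilon> * (\<Sum>(h,x)\<leftarrow>u. norm x)" by (simp add: alphaZ)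
  have dom: "labs (\<Sum>(f,y)\<leftarrow>map (\<lambda>(h,x). (h, J x)) u. \<phi> f *\<^sub>R y) \<le> onorm \<phi> *\<^sub>R z"
    if bl: "bounded_linear \<phi>" for \<phi>
  proof -
    have linphi: "linear \<phi>" using bl bounded_linear.linear by blast
    have lT1: "linear (T1 \<sigma>)" using T1_bl bounded_linear.linear by blast
    have lpsi: "linear (\<lambda>g. \<phi> (T1 \<sigma> g))"
      using linear_compose[OF lT1 linphi] by (simp add: o_def)
    define c where "c k = \<phi> (T1 \<sigma> (unitvec k))" for k
    define dd where "dd h = h - T1 \<sigma> (T2 p K h)" for h
    have split: "\<phi> h = (\<Sum>k<K. apply_bcontfun h (p k) * c k) + \<phi> (dd h)" for h
    proof -
      have "\<phi> h = \<phi> (T1 \<sigma> (T2 p K h)) + \<phi> (dd h)"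
        unfolding dd_def by (simp add: linear_diff[OF linphi])
      also have "\<phi> (T1 \<sigma> (T2 p K h)) = (\<Sum>k<K. apply_bcontfun h (p k) * c k)"
        unfolding T2_expand c_def by (simp add: linear_sum[OF lpsi] linear_scale[OF lpsi])
      finally show ?thesis .
    qed
    define A where "A = (\<Sum>k<K. c k *\<^sub>R J (vv k))"
    define B where "B = (\<Sum>(h,x)\<leftarrow>u. \<phi> (dd h) *\<^sub>R J x)"
    have AB: "(\<Sum>(f,y)\<leftarrow>map (\<lambda>(h,x). (h, J x)) u. \<phi> f *\<^sub>R y) = A + B"
    proof -
      have "(\<Sum>(f,y)\<leftarrow>map (\<lambda>(h,x). (h, J x)) u. \<phi> f *\<^sub>R y)
          = (\<Sum>(h,x)\<leftarrow>u. (\<Sum>k<K. apply_bcontfun h (p k) * c k) *\<^sub>R J x + \<phi> (dd h) *\<^sub>R J x)"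
      proof -
        have sp2: "\<phi> h *\<^sub>R J x = (\<Sum>k<K. apply_bcontfun h (p k) * c k) *\<^sub>R J x + \<phi> (dd h) *\<^sub>R J x" for h x
          using split[of h] by (metis scaleR_left_distrib)
        have mapeq: "map (\<lambda>(h,x). \<phi> h *\<^sub>R J x) u = map (\<lambda>(h,x). (\<Sum>k<K. apply_bcontfun h (p k) * c k) *\<^sub>R J x + \<phi> (dd h) *\<^sub>R J x) u"
          by (intro map_cong refl) (clarsimp, rule sp2)
        show ?thesis unfolding sumJ by (rule arg_cong[where f=sum_list, OF mapeq])
      qed
      also have "\<dots> = (\<Sum>(h,x)\<leftarrow>u. \<Sum>k<K. (c k * apply_bcontfun h (p k)) *\<^sub>R J x) + B"
        unfolding B_def by (simp add: case_prod_unfold sum_list_addf scaleR_sum_left mult.commute)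
      also have "(\<Sum>(h,x)\<leftarrow>u. \<Sum>k<K. (c k * apply_bcontfun h (p k)) *\<^sub>R J x) = A"
        unfolding A_def Jvv by (simp add: case_prod_unfold sum_list_swap scaleR_sum_list)
      finally show ?thesis .
    qed
    have op0: "0 \<le> onorm \<phi>" by (rule onorm_pos_le[OF bl])
    have "labs A \<le> (\<Sum>k<K. labs (c k *\<^sub>R J (vv k)))" unfolding A_def by (rule labs_sum)
    also have "\<dots> \<le> (\<Sum>k<K. \<bar>c k\<bar> *\<^sub>R LL)"
    proof (rule sum_mono)
      fix k assume "k \<in> {..<K}"
      then have "labs (J (vv k)) \<le> LL" using LL_upper by simp
      then have "\<bar>c k\<bar> *\<^sub>R labs (J (vv k)) \<le> \<bar>c k\<bar> *\<^sub>R LL" by (rule scaleR_left_mono) simp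
      then show "labs (c k *\<^sub>R J (vv k)) \<le> \<bar>c k\<bar> *\<^sub>R LL" using labs_scale order_trans by blast
    qed
    also have "\<dots> = (\<Sum>k<K. \<bar>c k\<bar>) *\<^sub>R LL" by (simp add: scaleR_sum_left)
    also have "\<dots> \<le> onorm \<phi> *\<^sub>R LL"
      by (rule scaleR_right_mono[OF _ LL_nonneg]) (unfold c_def, rule coef_bound[OF bl])
    finally have lA: "labs A \<le> onorm \<phi> *\<^sub>R LL" .
    have "labs B \<le> (\<Sum>(h,x)\<leftarrow>u. labs (\<phi> (dd h) *\<^sub>R J x))"
      unfolding B_def using labs_sum_list[of "\<lambda>(h,x). \<phi> (dd h) *\<^sub>R J x" u]
      by (simp add: case_prod_unfold)
    also have "\<dots> \<le> (\<Sum>(h,x)\<leftarrow>u. (onorm \<phi> * \<epsilon>) *\<^sub>R labs (J x))"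
    proof (rule sum_list_mono)
      fix a assume a: "a \<in> set u"
      obtain h x where hx: "a = (h,x)" by force
      have "\<bar>\<phi> (dd h)\<bar> \<le> onorm \<phi> * norm (dd h)" using onorm[OF bl, of "dd h"] by simp
      also have "\<dots> \<le> onorm \<phi> * \<epsilon>"
        using d_norm[of h x] a hx unfolding dd_def by (intro mult_left_mono[OF _ op0]) simp
      finally have "\<bar>\<phi> (dd h)\<bar> *\<^sub>R labs (J x) \<le> (onorm \<phi> * \<epsilon>) *\<^sub>R labs (J x)"
        by (rule scaleR_right_mono[OF _ labs_nonneg])
      then show "(case a of (h,x) \<Rightarrow> labs (\<phi> (dd h) *\<^sub>R J x)) \<le> (case a of (h,x) \<Rightarrow> (onorm \<phi> * \<epsilon>) *\<^sub>R labs (J x))"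
        using labs_scale[of "\<phi> (dd h)" "J x"] hx by simp
    qed
    also have "\<dots> = (onorm \<phi> * \<epsilon>) *\<^sub>R S"
      unfolding S_def using scaleR_sum_list[of "onorm \<phi> * \<epsilon>" "\<lambda>(h,x). labs (J x)" u]
      by (simp add: case_prod_unfold)
    finally have lB: "labs B \<le> (onorm \<phi> * \<epsilon>) *\<^sub>R S" .
    have "labs (A + B) \<le> labs A + labs B" by (rule labs_triangle)
    also have "\<dots> \<le> onorm \<phi> *\<^sub>R LL + (onorm \<phi> * \<epsilon>) *\<^sub>R S" by (rule add_mono[OF lA lB])
    also have "\<dots> = onorm \<phi> *\<^sub>R z" unfolding z_def by (simp add: scaleR_right_distrib)
    finally show ?thesis unfolding AB .
  qed
  show ?thesis using z0 nz dom by blast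
qed

end


lemma floor_close:
  fixes a b \<epsilon> :: real
  assumes "0 < \<epsilon>" "\<lfloor>a / \<epsilon>\<rfloor> = \<lfloor>b / \<epsilon>\<rfloor>"
  shows "\<bar>a - b\<bar> \<le> \<epsilon>"
proof -
  have "\<bar>a / \<epsilon> - b / \<epsilon>\<bar> < 1"
    using assms(2) of_int_floor_le[of "a/\<epsilon>"] of_int_floor_le[of "b/\<epsilon>"]
      real_of_int_floor_add_one_gt[of "a/\<epsilon>"] real_of_int_floor_add_one_gt[of "b/\<epsilon>"]
    by (simp add: abs_less_iff) linarith
  then have "\<bar>(a - b) / \<epsilon>\<bar> < 1" by (simp add: diff_divide_distrib)
  then have "\<bar>a - b\<bar> / \<epsilon> < 1" using assms(1) by simp
  then show ?thesis using assms(1) by (simp add: divide_less_eq)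
qed

lemma approx_exists:
  fixes u :: "(linf \<times> 'x) list" and \<epsilon> :: real
  assumes ep: "0 < \<epsilon>"
  shows "\<exists>(K::nat) (\<sigma>::nat\<Rightarrow>nat) (p::nat\<Rightarrow>nat). 0 < K \<and> (\<forall>i. \<sigma> i < K) \<and>
    (\<forall>(h,x)\<in>set u. \<forall>i. \<bar>apply_bcontfun h i - apply_bcontfun h (p (\<sigma> i))\<bar> \<le> \<epsilon>)"
proof -
  define q where "q i = map (\<lambda>(h,x). \<lfloor>apply_bcontfun h i / \<epsilon>\<rfloor>) u" for i
  define M where "M = (\<Sum>(h,x)\<leftarrow>u. norm h)"
  define N :: int where "N = \<lceil>M / \<epsilon>\<rceil> + 1"
  have hM: "norm h \<le> M" if "(h,x) \<in> set u" for h x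
  proof -
    have "norm h \<in> set (map (\<lambda>(h,x). norm h) u)" using that by force
    then show ?thesis unfolding M_def
      by (rule member_le_sum_list) auto
  qed
  have bnd: "\<lfloor>apply_bcontfun h i / \<epsilon>\<rfloor> \<in> {-N..N}" if "(h,x) \<in> set u" for h x i
  proof -
    have a: "\<bar>apply_bcontfun h i\<bar> \<le> M" using hM[OF that] bc_abs_le[of h i] by linarith
    define t where "t = apply_bcontfun h i / \<epsilon>"
    have tb: "\<bar>t\<bar> \<le> M / \<epsilon>" unfolding t_def using a ep by (simp add: abs_div divide_right_mono)
    have f1: "real_of_int \<lfloor>t\<rfloor> \<le> t" by (rule of_int_floor_le)
    have f2: "t < real_of_int \<lfloor>t\<rfloor> + 1" by (rule real_of_int_floor_add_one_gt)
    have f3: "M / \<epsilon> \<le> real_of_int \<lceil>M / \<epsilon>\<rceil>" by (rule le_of_int_ceiling)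
    have t1: "t \<le> M/\<epsilon>" "-t \<le> M/\<epsilon>" using tb by (auto simp: abs_le_iff)
    have "real_of_int \<lfloor>t\<rfloor> \<le> real_of_int N" unfolding N_def using t1 f1 f3
      by (simp only: of_int_add of_int_1; linarith)
    moreover have "real_of_int (- N) \<le> real_of_int \<lfloor>t\<rfloor>" unfolding N_def using t1 f2 f3
      by (simp only: of_int_add of_int_1 of_int_minus; linarith)
    ultimately have "\<lfloor>t\<rfloor> \<le> N" "- N \<le> \<lfloor>t\<rfloor>" by (simp_all only: of_int_le_iff)
    then show ?thesis unfolding t_def by simp
  qed
  have "range q \<subseteq> {xs. set xs \<subseteq> {-N..N} \<and> length xs = length u}"
    using bnd unfolding q_def by auto
  then have "finite (range q)"
    by (rule finite_subset) (rule finite_lists_length_eq, simp)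
  then obtain L where L: "set L = range q" using finite_list by blast
  define K where "K = length L"
  have Kpos: "0 < K" unfolding K_def using L by (cases L) auto
  have "\<forall>i. \<exists>k. k < K \<and> L ! k = q i"
    using L unfolding K_def by (metis in_set_conv_nth rangeI)
  then obtain \<sigma> where s: "\<forall>i. \<sigma> i < K \<and> L ! \<sigma> i = q i" by metis
  have "\<forall>k. \<exists>i. k < K \<longrightarrow> q i = L ! k"
    using L unfolding K_def by (metis nth_mem rangeE)
  then obtain p where pp: "\<forall>k. k < K \<longrightarrow> q (p k) = L ! k" by metis
  have qq: "q (p (\<sigma> i)) = q i" for i using s pp by metis
  have "\<forall>(h,x)\<in>set u. \<forall>i. \<bar>apply_bcontfun h i - apply_bcontfun h (p (\<sigma> i))\<bar> \<le> \<epsilon>"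
  proof (clarify)
    fix h x i assume hx: "(h,x) \<in> set u"
    have "map (\<lambda>(h,x). \<lfloor>apply_bcontfun h i / \<epsilon>\<rfloor>) u = map (\<lambda>(h,x). \<lfloor>apply_bcontfun h (p (\<sigma> i)) / \<epsilon>\<rfloor>) u"
      using qq[of i] unfolding q_def by simp
    then have "\<lfloor>apply_bcontfun h i / \<epsilon>\<rfloor> = \<lfloor>apply_bcontfun h (p (\<sigma> i)) / \<epsilon>\<rfloor>"
      using hx by (auto simp: map_eq_conv)
    then show "\<bar>apply_bcontfun h i - apply_bcontfun h (p (\<sigma> i))\<bar> \<le> \<epsilon>"
      by (rule floor_close[OF ep])
  qed
  then show ?thesis using Kpos s by blast
qed

theorem corollary1p8:
  fixes \<alpha> :: "(linf \<times> 'x::banach) list \<Rightarrow> real"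
    and J :: "'x \<Rightarrow> 'l::{banach, ordered_real_vector, lattice}"
  assumes "left_tensorial \<alpha>"
    and "banach_lattice TYPE('l)"
    and "linear J" and "\<forall>x. norm (J x) = norm x"
    and "\<forall>ys :: 'x list. ys \<noteq> [] \<longrightarrow>
           norm (lsup (map (\<lambda>y. labs (J y)) ys)) = \<alpha> (zip (map unitvec [0..<length ys]) ys)"
  shows "\<forall>u :: (linf \<times> 'x) list.
           m_norm (map (\<lambda>(h,x). (h, J x)) u) = ereal (\<alpha> u)"
proof
  fix u :: "(linf \<times> 'x) list"
  note A = assms
  define C where "C = (\<Sum>(h,x)\<leftarrow>u. norm x)"
  have C0: "0 \<le> C" unfolding C_def by (rule sum_list_nonneg) auto
  define D where "D = {ereal (norm z) | z. 0 \<le> z \<and>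
      (\<forall>\<phi> :: linf \<Rightarrow> real. bounded_linear \<phi> \<longrightarrow>
         labs (\<Sum>(f,y)\<leftarrow>map (\<lambda>(h,x). (h, J x)) u. \<phi> f *\<^sub>R y) \<le> onorm \<phi> *\<^sub>R z)}"
  have mD: "m_norm (map (\<lambda>(h,x). (h, J x)) u) = Inf D"
    unfolding m_norm_def D_def ..
  have epsC: "(e / (C + 1)) * C \<le> e" if "0 < e" for e
  proof -
    have "(e / (C + 1)) * C = e * (C / (C + 1))" by simp
    also have "\<dots> \<le> e * 1" using C0 that by (intro mult_left_mono) auto
    finally show ?thesis by simp
  qed
  have lower: "\<alpha> u \<le> norm z"
    if z0: "0 \<le> z" and dom: "\<forall>\<phi> :: linf \<Rightarrow> real. bounded_linear \<phi> \<longrightarrow>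
         labs (\<Sum>(f,y)\<leftarrow>map (\<lambda>(h,x). (h, J x)) u. \<phi> f *\<^sub>R y) \<le> onorm \<phi> *\<^sub>R z" for z
  proof (rule field_le_epsilon)
    fix e :: real assume e: "0 < e"
    define \<epsilon> where "\<epsilon> = e / (C + 1)"
    have ep: "0 < \<epsilon>" unfolding \<epsilon>_def using e C0 by simp
    obtain K :: nat and \<sigma> p :: "nat \<Rightarrow> nat" where K: "0 < K" "\<forall>i. \<sigma> i < K"
      "\<forall>(h,x)\<in>set u. \<forall>i. \<bar>apply_bcontfun h i - apply_bcontfun h (p (\<sigma> i))\<bar> \<le> \<epsilon>"
      using approx_exists[OF ep, of u] by blast
    note B = claimB[OF A K(1,2) less_imp_le[OF ep] K(3)]
    note Dd = claimD[OF A K(1,2) less_imp_le[OF ep] K(3) z0 dom]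
    show "\<alpha> u \<le> norm z + e" using B Dd epsC[OF e] unfolding C_def \<epsilon>_def by linarith
  qed
  have upper: "\<exists>z. 0 \<le> z \<and> (\<forall>\<phi> :: linf \<Rightarrow> real. bounded_linear \<phi> \<longrightarrow>
         labs (\<Sum>(f,y)\<leftarrow>map (\<lambda>(h,x). (h, J x)) u. \<phi> f *\<^sub>R y) \<le> onorm \<phi> *\<^sub>R z) \<and> norm z \<le> \<alpha> u + e"
    if e: "0 < e" for e
  proof -
    define \<epsilon> where "\<epsilon> = e / (C + 1)"
    have ep: "0 < \<epsilon>" unfolding \<epsilon>_def using e C0 by simp
    obtain K :: nat and \<sigma> p :: "nat \<Rightarrow> nat" where K: "0 < K" "\<forall>i. \<sigma> i < K"
      "\<forall>(h,x)\<in>set u. \<forall>i. \<bar>apply_bcontfun h i - apply_bcontfun h (p (\<sigma> i))\<bar> \<le> \<epsilon>"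
      using approx_exists[OF ep, of u] by blast
    note Ca = claimA[OF A K(1,2) less_imp_le[OF ep] K(3)]
    obtain z where z: "0 \<le> z" "\<forall>\<phi> :: linf \<Rightarrow> real. bounded_linear \<phi> \<longrightarrow>
         labs (\<Sum>(f,y)\<leftarrow>map (\<lambda>(h,x). (h, J x)) u. \<phi> f *\<^sub>R y) \<le> onorm \<phi> *\<^sub>R z"
      "norm z \<le> \<alpha> (ZZ u K p) + \<epsilon> * (\<Sum>(h,x)\<leftarrow>u. norm x)"
      using claimC[OF A K(1,2) less_imp_le[OF ep] K(3)] by blast
    have "norm z \<le> \<alpha> u + e" using z(3) Ca epsC[OF e] unfolding C_def \<epsilon>_def by linarith
    then show ?thesis using z by blast
  qed
  show "m_norm (map (\<lambda>(h,x). (h, J x)) u) = ereal (\<alpha> u)"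
    unfolding mD
  proof (rule antisym)
    show "Inf D \<le> ereal (\<alpha> u)"
    proof (rule ereal_le_epsilon2)
      fix e :: real assume e: "0 < e"
      obtain z where z: "0 \<le> z" "\<forall>\<phi> :: linf \<Rightarrow> real. bounded_linear \<phi> \<longrightarrow>
         labs (\<Sum>(f,y)\<leftarrow>map (\<lambda>(h,x). (h, J x)) u. \<phi> f *\<^sub>R y) \<le> onorm \<phi> *\<^sub>R z" "norm z \<le> \<alpha> u + e"
        using upper[OF e] by blast
      have "Inf D \<le> ereal (norm z)" unfolding D_def using z(1,2) by (intro Inf_lower) blast
      also have "\<dots> \<le> ereal (\<alpha> u) + ereal e" using z(3) by simp
      finally show "Inf D \<le> ereal (\<alpha> u) + ereal e" .
    qed
    show "ereal (\<alpha> u) \<le> Inf D"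
    proof (rule Inf_greatest)
      fix y assume "y \<in> D"
      then obtain z where "y = ereal (norm z)" "0 \<le> z" "\<forall>\<phi> :: linf \<Rightarrow> real. bounded_linear \<phi> \<longrightarrow>
         labs (\<Sum>(f,y)\<leftarrow>map (\<lambda>(h,x). (h, J x)) u. \<phi> f *\<^sub>R y) \<le> onorm \<phi> *\<^sub>R z"
        unfolding D_def by blast
      then show "ereal (\<alpha> u) \<le> y" using lower by simp
    qed
  qed
qed

end
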